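(* Let $\mathbf{k}$ be a commutative noetherian ring, $M\ge0$, and let $I\subseteq\mathcal{P}_M$ be an ideal. Then $\mathrm{init}(I)$ is a monomial ideal of $\mathcal{P}_M$.
   Context: Notation: $\mathcal{P}_{d,n}=(\bigwedge^d\mathbf{k}^{Md})^{\otimes n}$, $\mathcal{P}_M=\bigoplus_{d,n\ge0}\mathcal{P}_{d,n}$, with standard basis $v_1,\dots,v_{Md}$ of $\mathbf{k}^{Md}$ and $v_S=v_{s_1}\wedge\cdots\wedge v_{s_d}$ for $S=\{s_1<\dots<s_d\}\subseteq[Md]$; monomials are $c\,v_{S^1}\otimes\cdots\otimes v_{S^n}$, $c\in\mathbf k$. Products: for a split $\sigma=(A,B)$ of $[n+m]$ (complementary subsets $A=\{i_1<\dots<i_n\}$, $B=\{j_1<\dots<j_m\}$), $(u_1\otimes\cdots\otimes u_n)\cdot_\sigma(w_1\otimes\cdots\otimes w_m)=z_1\otimes\cdots\otimes z_{n+m}$ with $z_{i_k}=u_k$, $z_{j_k}=w_k$ (bilinear; $0$ if bidegrees do not fit). For $g$ a strictly increasing map $\mathbf N\to\mathbf N$ and $f\in\mathcal{P}_{d,n}$, $h\in\mathcal{P}_{e,n}$: $f\ast_g h=0$ unless $g([Md])\subseteq[M(d+e)]$, in which case with $g^c:[Me]\to[M(d+e)]$ the increasing bijection onto $[M(d+e)]\setminus g([Md])$, $(v_{S^1}\otimes\cdots\otimes v_{S^n})\ast_g(v_{T^1}\otimes\cdots\otimes v_{T^n})=\bigotimes_i (v_{g(s^i_1)}\wedge\cdots\wedge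 v_{g(s^i_d)}\wedge v_{g^c(t^i_1)}\wedge\cdots\wedge v_{g^c(t^i_e)})$ (bilinear; $0$ for different numbers of tensor factors). An ideal is a $\mathbf{k}$-submodule $I=\bigoplus_{d,n}(I\cap\mathcal{P}_{d,n})$ with $f\ast_g h\in I$ and $h\cdot_\sigma f\in I$ for all $f\in I$, $h\in\mathcal P$, $g$, $\sigma$; a monomial ideal is an ideal generated by monomials. Monomial order: encode the basis monomial $v_{S^1}\otimes\cdots\otimes v_{S^n}$ of bidegree $(d,n)$ as the element $(S^1,\dots,S^n)\in(\mathbf{Z}^d)^n$, each $S^i$ written as its increasing sequence of entries; order $\mathbf Z^d$ lexicographically and then $(\mathbf Z^d)^n$ lexicographically; call this total order $\preceq$ (only monomials of the same bidegree are compared). For $f\in\mathcal{P}_{d,n}$ nonzero, $\mathrm{init}(f)$ is the $\preceq$-largest basis monomial occurring in $f$ with nonzero coefficient, together with that coefficient. For an ideal $I$, $\mathrm{init}(I)$ is the $\mathbf k$-span of $\{\mathrm{init}(f): f\in I\cap\mathcal P_{d,n}$ for some $d,n\}$. *)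

theory Defs
  imports Main "HOL-Library.List_Lexorder"
begin

definition ring_ideal :: "'a::comm_ring_1 set \<Rightarrow> bool" where
  "ring_ideal J \<longleftrightarrow> 0 \<in> J \<and> (\<forall>x\<in>J. \<forall>y\<in>J. x + y \<in> J) \<and> (\<forall>r. \<forall>x\<in>J. r * x \<in> J)"

definition ring_span :: "'a::comm_ring_1 set \<Rightarrow> 'a set" where
  "ring_span F = {y. \<exists>c. y = (\<Sum>x\<in>F. c x * x)}"

definition noetherian_ring :: "'a::comm_ring_1 itself \<Rightarrow> bool" where
  "noetherian_ring _ \<longleftrightarrow>
     (\<forall>J::'a set. ring_ideal J \<longrightarrow> (\<exists>F. finite F \<and> F \<subseteq> J \<and> J = ring_span F))"

text \<open>A basis monomial v_{S^1} (x) ... (x) v_{S^n} of bidegree (d,n) is encoded as the pair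
  (d, [S^1,...,S^n]); the exterior degree d is kept explicitly (needed when n = 0).\<close>

type_synonym key = "nat \<times> nat set list"

definition valid_key :: "nat \<Rightarrow> key \<Rightarrow> bool" where
  "valid_key M x \<longleftrightarrow> (\<forall>S \<in> set (snd x). S \<subseteq> {1..M * fst x} \<and> card S = fst x)"

definition bideg :: "key \<Rightarrow> nat \<times> nat" where
  "bideg x = (fst x, length (snd x))"

definition supp :: "(key \<Rightarrow> 'k::comm_ring_1) \<Rightarrow> key set" where
  "supp f = {x. f x \<noteq> 0}"

definition PM :: "nat \<Rightarrow> (key \<Rightarrow> 'k::comm_ring_1) set" where
  "PM M = {f. finite (supp f) \<and> (\<forall>x \<in> supp f. valid_key M x)}"

definition Pdn :: "nat \<Rightarrow> nat \<Rightarrow> nat \<Rightarrow> (key \<Rightarrow> 'k::comm_ring_1) set" where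
  "Pdn M d n = {f \<in> PM M. \<forall>x \<in> supp f. bideg x = (d, n)}"

definition hcomp :: "nat \<Rightarrow> nat \<Rightarrow> (key \<Rightarrow> 'k::comm_ring_1) \<Rightarrow> (key \<Rightarrow> 'k)" where
  "hcomp d n f = (\<lambda>x. if bideg x = (d, n) then f x else 0)"

definition monomial :: "key \<Rightarrow> 'k::comm_ring_1 \<Rightarrow> (key \<Rightarrow> 'k)" where
  "monomial x c = (\<lambda>z. if z = x then c else 0)"

definition monomials :: "nat \<Rightarrow> (key \<Rightarrow> 'k::comm_ring_1) set" where
  "monomials M = {monomial x c | x c. valid_key M x}"

text \<open>Bilinear extension of a product on basis monomials, given as an optional
  (integer sign, resulting basis monomial).\<close>

definition lift :: "(key \<Rightarrow> key \<Rightarrow> (int \<times> key) option)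
     \<Rightarrow> (key \<Rightarrow> 'k::comm_ring_1) \<Rightarrow> (key \<Rightarrow> 'k) \<Rightarrow> (key \<Rightarrow> 'k)" where
  "lift F f h = (\<lambda>z. \<Sum>x\<in>supp f. \<Sum>y\<in>supp h.
      (case F x y of None \<Rightarrow> 0
                   | Some (c, w) \<Rightarrow> if w = z then of_int c * f x * h y else 0))"

text \<open>Tensor concatenation along a split sigma = (A,B) of [n+m] = {1..n+m}.\<close>

definition interleave :: "nat set \<Rightarrow> nat set \<Rightarrow> 'a list \<Rightarrow> 'a list \<Rightarrow> nat \<Rightarrow> 'a" where
  "interleave A B us ws i =
     (if i \<in> A then us ! card {a \<in> A. a < i} else ws ! card {b \<in> B. b < i})"

definition sigma_mono :: "nat set \<Rightarrow> nat set \<Rightarrow> key \<Rightarrow> key \<Rightarrow> (int \<times> key) option" where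
  "sigma_mono A B x y =
     (let n = length (snd x); m = length (snd y) in
      if fst x = fst y \<and> A \<inter> B = {} \<and> A \<union> B = {1..n + m} \<and> card A = n
      then Some (1, (fst x, map (interleave A B (snd x) (snd y)) [1..<n + m + 1]))
      else None)"

definition sigma_prod :: "nat set \<Rightarrow> nat set \<Rightarrow> (key \<Rightarrow> 'k::comm_ring_1) \<Rightarrow> (key \<Rightarrow> 'k) \<Rightarrow> (key \<Rightarrow> 'k)" where
  "sigma_prod A B = lift (sigma_mono A B)"

text \<open>The product f *_g h. g^c is the increasing bijection [Me] -> [M(d+e)] - g([Md]);
  the sign is that of sorting the wedge v_{g(s_1)} ^ ... ^ v_{g(s_d)} ^ v_{g^c(t_1)} ^ ... ^ v_{g^c(t_e)},
  i.e. (-1) to the number of pairs a in g(S), b in g^c(T) with b < a.\<close>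

definition gcomp :: "nat \<Rightarrow> (nat \<Rightarrow> nat) \<Rightarrow> nat \<Rightarrow> nat \<Rightarrow> nat \<Rightarrow> nat" where
  "gcomp M g d e t = sorted_list_of_set ({1..M * (d + e)} - g ` {1..M * d}) ! (t - 1)"

definition wedge_inv :: "nat set \<Rightarrow> nat set \<Rightarrow> nat" where
  "wedge_inv P Q = card {(a, b). a \<in> P \<and> b \<in> Q \<and> b < a}"

definition star_mono :: "nat \<Rightarrow> (nat \<Rightarrow> nat) \<Rightarrow> key \<Rightarrow> key \<Rightarrow> (int \<times> key) option" where
  "star_mono M g x y =
     (let d = fst x; e = fst y; gc = gcomp M g d e in
      if length (snd x) = length (snd y) \<and> g ` {1..M * d} \<subseteq> {1..M * (d + e)}
      then Some ((-1) ^ (\<Sum>(S, T)\<leftarrow>zip (snd x) (snd y). wedge_inv (g ` S) (gc ` T)),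
                 (d + e, map (\<lambda>(S, T). g ` S \<union> gc ` T) (zip (snd x) (snd y))))
      else None)"

definition star_prod :: "nat \<Rightarrow> (nat \<Rightarrow> nat) \<Rightarrow> (key \<Rightarrow> 'k::comm_ring_1) \<Rightarrow> (key \<Rightarrow> 'k) \<Rightarrow> (key \<Rightarrow> 'k)" where
  "star_prod M g = lift (star_mono M g)"

definition is_ideal :: "nat \<Rightarrow> (key \<Rightarrow> 'k::comm_ring_1) set \<Rightarrow> bool" where
  "is_ideal M I \<longleftrightarrow>
     I \<subseteq> PM M \<and> (\<lambda>_. 0) \<in> I \<and>
     (\<forall>f\<in>I. \<forall>h\<in>I. (\<lambda>z. f z + h z) \<in> I) \<and>
     (\<forall>c. \<forall>f\<in>I. (\<lambda>z. c * f z) \<in> I) \<and>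
     (\<forall>f\<in>I. \<forall>d n. hcomp d n f \<in> I) \<and>
     (\<forall>f\<in>I. \<forall>h\<in>PM M. \<forall>g. strict_mono g \<longrightarrow> star_prod M g f h \<in> I) \<and>
     (\<forall>f\<in>I. \<forall>h\<in>PM M. \<forall>A B. sigma_prod A B h f \<in> I)"

definition ideal_gen :: "nat \<Rightarrow> (key \<Rightarrow> 'k::comm_ring_1) set \<Rightarrow> (key \<Rightarrow> 'k) set" where
  "ideal_gen M G = \<Inter>{J. is_ideal M J \<and> G \<subseteq> J}"

definition monomial_ideal :: "nat \<Rightarrow> (key \<Rightarrow> 'k::comm_ring_1) set \<Rightarrow> bool" where
  "monomial_ideal M I \<longleftrightarrow> is_ideal M I \<and> (\<exists>G \<subseteq> monomials M. I = ideal_gen M G)"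

text \<open>Monomial order: (S^1,...,S^n), each S^i as its increasing sequence, compared
  lexicographically (List_Lexorder); only used within a fixed bidegree.\<close>

definition key_rep :: "key \<Rightarrow> nat list list" where
  "key_rep x = map sorted_list_of_set (snd x)"

definition lead_key :: "(key \<Rightarrow> 'k::comm_ring_1) \<Rightarrow> key" where
  "lead_key f = (THE x. x \<in> supp f \<and> (\<forall>y \<in> supp f. key_rep y \<le> key_rep x))"

definition init :: "(key \<Rightarrow> 'k::comm_ring_1) \<Rightarrow> (key \<Rightarrow> 'k)" where
  "init f = monomial (lead_key f) (f (lead_key f))"

definition kspan :: "(key \<Rightarrow> 'k::comm_ring_1) set \<Rightarrow> (key \<Rightarrow> 'k) set" where
  "kspan X = {f. \<exists>F c. finite F \<and> F \<subseteq> X \<and> f = (\<lambda>z. \<Sum>p\<in>F. c p * p z)}"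

definition init_ideal :: "nat \<Rightarrow> (key \<Rightarrow> 'k::comm_ring_1) set \<Rightarrow> (key \<Rightarrow> 'k) set" where
  "init_ideal M I = kspan {init f | f. f \<noteq> (\<lambda>_. 0) \<and> (\<exists>d n. f \<in> I \<inter> Pdn M d n)}"

end

theory Submission
  imports Defs
begin


definition setless :: "nat set \<Rightarrow> nat set \<Rightarrow> bool" where
  "setless A B \<longleftrightarrow> A \<noteq> B \<and> Min ((A - B) \<union> (B - A)) \<in> A"

lemma setless_sorted:
  assumes "finite A" "finite B" "card A = card B" "setless A B"
  shows "sorted_list_of_set A < sorted_list_of_set B"
  using assms
proof (induction "card A" arbitrary: A B)
  case 0
  then show ?case by (auto simp: setless_def)
next
  case (Suc k)
  then have ne: "A \<noteq> {}" "B \<noteq> {}" by auto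
  define a where "a = Min A"
  define b where "b = Min B"
  have la: "sorted_list_of_set A = a # sorted_list_of_set (A - {a})"
    using sorted_list_of_set_nonempty[OF Suc.prems(1) ne(1)] a_def by simp
  have lb: "sorted_list_of_set B = b # sorted_list_of_set (B - {b})"
    using sorted_list_of_set_nonempty[OF Suc.prems(2) ne(2)] b_def by simp
  have aA: "a \<in> A" using a_def Suc.prems ne by simp
  have bB: "b \<in> B" using b_def Suc.prems ne by simp
  consider "a = b" | "a < b" | "b < a" by linarith
  then show ?case
  proof cases
    case 1
    have D: "((A - {a}) - (B - {a})) \<union> ((B - {a}) - (A - {a})) = (A - B) \<union> (B - A)"
      using 1 aA bB by auto
    have "Min ((A - B) \<union> (B - A)) \<in> A" using Suc.prems(4) setless_def by blast
    moreover have "a \<notin> (A - B) \<union> (B - A)" using 1 aA bB by auto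
    moreover have "Min ((A - B) \<union> (B - A)) \<in> (A - B) \<union> (B - A)"
      using Suc.prems setless_def by (intro Min_in) auto
    have "setless (A - {a}) (B - {a})"
      unfolding setless_def D
    proof (intro conjI)
      show "A - {a} \<noteq> B - {a}" using D \<open>Min ((A - B) \<union> (B - A)) \<in> (A - B) \<union> (B - A)\<close> by force
      show "Min ((A - B) \<union> (B - A)) \<in> A - {a}"
        using \<open>Min ((A - B) \<union> (B - A)) \<in> A\<close> \<open>a \<notin> (A - B) \<union> (B - A)\<close>
          \<open>Min ((A - B) \<union> (B - A)) \<in> (A - B) \<union> (B - A)\<close> by auto
    qed
    moreover have "card (A - {a}) = k" using Suc.hyps aA Suc.prems by simp
    moreover have "card (B - {a}) = card (A - {a})" using Suc.prems aA bB 1 by simp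
    ultimately have "sorted_list_of_set (A - {a}) < sorted_list_of_set (B - {a})"
      using Suc.hyps(1)[of "A - {a}" "B - {a}"] Suc.prems by simp
    then show ?thesis using la lb 1 by simp
  next
    case 2 then show ?thesis using la lb by simp
  next
    case 3
    have "b \<notin> A" using 3 a_def Suc.prems(1) by (meson Min_le leD)
    then have bD: "b \<in> (A - B) \<union> (B - A)" using bB by simp
    have fD: "finite ((A - B) \<union> (B - A))" using Suc.prems by simp
    have m: "Min ((A - B) \<union> (B - A)) \<le> b" using Min_le[OF fD bD] .
    have "Min ((A - B) \<union> (B - A)) \<in> A" using Suc.prems(4) setless_def by blast
    then have "a \<le> Min ((A - B) \<union> (B - A))" using a_def Suc.prems(1) by simp
    then show ?thesis using m 3 by simp
  qed
qed

lemma sorted_setless: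
  assumes "finite A" "finite B" "card A = card B"
    "sorted_list_of_set A < sorted_list_of_set B"
  shows "setless A B"
proof (rule ccontr)
  assume n: "\<not> setless A B"
  have "A \<noteq> B" using assms(4) by auto
  then have ne: "(A - B) \<union> (B - A) \<noteq> {}" by auto
  have "Min ((A - B) \<union> (B - A)) \<in> (A - B) \<union> (B - A)"
    using ne assms by (intro Min_in) auto
  then have "Min ((B - A) \<union> (A - B)) \<in> B" using n \<open>A \<noteq> B\<close> unfolding setless_def
    by (auto simp: Un_commute)
  then have "setless B A" using \<open>A \<noteq> B\<close> unfolding setless_def by auto
  then have "sorted_list_of_set B < sorted_list_of_set A"
    using setless_sorted assms by simp
  then show False using assms(4) by simp
qed


definition lexset :: "nat set list \<Rightarrow> nat set list \<Rightarrow> bool" where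
  "lexset xs ys \<longleftrightarrow> (\<exists>i<length xs. take i xs = take i ys \<and> setless (xs!i) (ys!i))"

lemma lexset_less:
  assumes "length xs = length ys"
    "\<forall>i<length xs. finite (xs!i) \<and> finite (ys!i) \<and> card (xs!i) = card (ys!i)"
    "lexset xs ys"
  shows "map sorted_list_of_set xs < map sorted_list_of_set ys"
proof -
  obtain i where i: "i < length xs" "take i xs = take i ys" "setless (xs!i) (ys!i)"
    using assms(3) lexset_def by blast
  have "sorted_list_of_set (xs!i) < sorted_list_of_set (ys!i)"
    using setless_sorted assms(2) i by blast
  moreover have "take i (map sorted_list_of_set xs) = take i (map sorted_list_of_set ys)"
    using i(2) by (metis take_map)
  ultimately show ?thesis unfolding list_less_def lexord_take_index_conv
    using i(1) assms(1) by auto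
qed

lemma less_lexset:
  assumes "length xs = length ys"
    "\<forall>i<length xs. finite (xs!i) \<and> finite (ys!i) \<and> card (xs!i) = card (ys!i)"
    "map sorted_list_of_set xs < map sorted_list_of_set ys"
  shows "lexset xs ys"
proof -
  obtain i where i: "i < length xs" "take i (map sorted_list_of_set xs) = take i (map sorted_list_of_set ys)"
    "sorted_list_of_set (xs!i) < sorted_list_of_set (ys!i)"
    using assms(3) assms(1) unfolding list_less_def[of "map sorted_list_of_set xs"]
      lexord_take_index_conv[of "map sorted_list_of_set xs"] by auto
  have "take i xs = take i ys"
  proof (rule nth_equalityI)
    show "length (take i xs) = length (take i ys)" using assms(1) by simp
    fix j assume j: "j < length (take i xs)"
    then have "sorted_list_of_set (xs!j) = sorted_list_of_set (ys!j)"
    proof -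
      have "take i (map sorted_list_of_set xs) ! j = take i (map sorted_list_of_set ys) ! j"
        using i(2) by simp
      then show ?thesis using j assms(1) by (simp add: nth_take)
    qed
    then show "take i xs ! j = take i ys ! j"
      using j assms(2) sorted_list_of_set_inject by auto
  qed
  moreover have "setless (xs!i) (ys!i)" using sorted_setless assms(2) i by blast
  ultimately show ?thesis unfolding lexset_def using i(1) by blast
qed

lemma keyrep_inj:
  assumes "f \<in> Pdn M d n"
  shows "inj_on key_rep (supp f)"
proof
  fix x y assume x: "x \<in> supp f" and y: "y \<in> supp f" and e: "key_rep x = key_rep y"
  have vx: "valid_key M x" "bideg x = (d, n)" and vy: "valid_key M y" "bideg y = (d, n)"
    using assms x y by (auto simp: Pdn_def PM_def)
  have l: "length (snd x) = length (snd y)" using e by (metis key_rep_def length_map)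
  have "snd x = snd y"
  proof (rule nth_equalityI[OF l])
    fix i assume i: "i < length (snd x)"
    have "sorted_list_of_set (snd x ! i) = sorted_list_of_set (snd y ! i)"
      using arg_cong[OF e, of "\<lambda>l. l ! i"] i l by (simp add: key_rep_def)
    moreover have "finite (snd x ! i)" "finite (snd y ! i)"
      using vx vy i l unfolding valid_key_def by (metis finite_atLeastAtMost finite_subset nth_mem)+
    ultimately show "snd x ! i = snd y ! i" using sorted_list_of_set_inject by blast
  qed
  moreover have "fst x = fst y" using vx vy by (simp add: bideg_def)
  ultimately show "x = y" by (simp add: prod_eq_iff)
qed

lemma supp_finite: "f \<in> Pdn M d n \<Longrightarrow> finite (supp f)"
  by (simp add: Pdn_def PM_def)

lemma lead_key_eq:
  assumes "f \<in> Pdn M d n" "x \<in> supp f" "\<forall>y\<in>supp f. key_rep y \<le> key_rep x"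
  shows "lead_key f = x"
  unfolding lead_key_def
proof (rule the_equality)
  show "x \<in> supp f \<and> (\<forall>y\<in>supp f. key_rep y \<le> key_rep x)" using assms by blast
  fix x' assume "x' \<in> supp f \<and> (\<forall>y\<in>supp f. key_rep y \<le> key_rep x')"
  then have "key_rep x' = key_rep x" using assms by (meson order_antisym)
  then show "x' = x" using keyrep_inj[OF assms(1)] assms(2) \<open>x' \<in> supp f \<and> _\<close>
    by (meson inj_onD)
qed

lemma lead_key_props:
  assumes "f \<in> Pdn M d n" "f \<noteq> (\<lambda>_. 0)"
  shows "lead_key f \<in> supp f \<and> (\<forall>y\<in>supp f. key_rep y \<le> key_rep (lead_key f))"
proof -
  have fin: "finite (key_rep ` supp f)" using supp_finite[OF assms(1)] by simp
  have ne: "supp f \<noteq> {}" using assms(2) by (auto simp: supp_def)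
  then have "Max (key_rep ` supp f) \<in> key_rep ` supp f" using fin by (intro Max_in) auto
  then obtain x where x: "x \<in> supp f" "key_rep x = Max (key_rep ` supp f)" by auto
  have "\<forall>y\<in>supp f. key_rep y \<le> key_rep x" using x(2) fin by simp
  then show ?thesis using lead_key_eq[OF assms(1) x(1)] x(1) by simp
qed

definition kap :: "(key \<Rightarrow> (int \<times> key) option) \<Rightarrow> key \<Rightarrow> key \<Rightarrow> 'k::comm_ring_1" where
  "kap F x z = (case F x of None \<Rightarrow> 0 | Some (c, w) \<Rightarrow> if w = z then of_int c else 0)"

definition lift1 :: "(key \<Rightarrow> (int \<times> key) option) \<Rightarrow> (key \<Rightarrow> 'k::comm_ring_1) \<Rightarrow> (key \<Rightarrow> 'k)" where
  "lift1 F f = (\<lambda>z. \<Sum>x\<in>supp f. kap F x z * f x)"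

lemma lift1_sup:
  assumes "finite A" "supp f \<subseteq> A"
  shows "lift1 F f z = (\<Sum>x\<in>A. kap F x z * f x)"
  unfolding lift1_def
  by (rule sum.mono_neutral_left[OF assms(1) assms(2)]) (auto simp: supp_def)

lemma supp_monomial: "c \<noteq> 0 \<Longrightarrow> supp (monomial x c) = {x}"
  by (auto simp: supp_def monomial_def)

lemma key_lemma:
  assumes f: "f \<in> Pdn M d n" "f \<noteq> (\<lambda>_. 0)"
    and some: "\<forall>x\<in>supp f. F x = Some (s x, \<phi> x)"
    and sgn: "\<forall>x\<in>supp f. s x = 1 \<or> s x = -1"
    and mono: "\<forall>x\<in>supp f. \<forall>x'\<in>supp f. key_rep x < key_rep x' \<longrightarrow> key_rep (\<phi> x) < key_rep (\<phi> x')"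
    and bid: "\<forall>x\<in>supp f. bideg (\<phi> x) = (d', n')"
    and PM: "lift1 F f \<in> PM M"
  shows "lift1 F f \<in> Pdn M d' n' \<and> lift1 F f \<noteq> (\<lambda>_. 0) \<and> init (lift1 F f) = lift1 F (init f)"
proof -
  have inj: "inj_on \<phi> (supp f)"
  proof
    fix x x' assume x: "x \<in> supp f" "x' \<in> supp f" "\<phi> x = \<phi> x'"
    show "x = x'"
    proof (rule ccontr)
      assume "x \<noteq> x'"
      then have "key_rep x \<noteq> key_rep x'" using keyrep_inj[OF f(1)] x by (meson inj_onD)
      then have "key_rep x < key_rep x' \<or> key_rep x' < key_rep x" by auto
      then show False using mono x by force
    qed
  qed
  have kapx: "kap F x z * f x = (if \<phi> x = z then of_int (s x) * f x else 0)" if "x \<in> supp f" for x z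
    using some that by (simp add: kap_def)
  have nz: "(of_int (s x) :: 'a) * f x \<noteq> 0" if "x \<in> supp f" for x
  proof -
    have "f x \<noteq> 0" using that by (simp add: supp_def)
    moreover have "s x = 1 \<or> s x = -1" using sgn that by blast
    ultimately show ?thesis by auto
  qed
  have val: "lift1 F f (\<phi> x0) = of_int (s x0) * f x0" if x0: "x0 \<in> supp f" for x0
  proof -
    have "lift1 F f (\<phi> x0) = (\<Sum>x\<in>supp f. if x = x0 then of_int (s x) * f x else 0)"
      unfolding lift1_def
    proof (rule sum.cong)
      fix x assume x: "x \<in> supp f"
      have "\<phi> x = \<phi> x0 \<longleftrightarrow> x = x0" using inj x x0 by (meson inj_onD)
      then show "kap F x (\<phi> x0) * f x = (if x = x0 then of_int (s x) * f x else 0)"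
        using kapx[OF x, of "\<phi> x0"] by auto
    qed simp
    also have "\<dots> = of_int (s x0) * f x0" using x0 supp_finite[OF f(1)] by simp
    finally show ?thesis .
  qed
  have zero: "lift1 F f z = 0" if "z \<notin> \<phi> ` supp f" for z
    unfolding lift1_def using kapx that by (intro sum.neutral) auto
  have suppe: "supp (lift1 F f) = \<phi> ` supp f"
    using val zero nz by (auto simp: supp_def) (metis imageI)
  have Pdn': "lift1 F f \<in> Pdn M d' n'" using PM bid suppe by (auto simp: Pdn_def)
  obtain lk where lk: "lk = lead_key f" by simp
  have lkp: "lk \<in> supp f" "\<forall>y\<in>supp f. key_rep y \<le> key_rep lk"
    using lead_key_props[OF f] lk by auto
  have ne: "lift1 F f \<noteq> (\<lambda>_. 0)" using val[OF lkp(1)] nz[OF lkp(1)] by force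
  have "\<forall>y\<in>supp (lift1 F f). key_rep y \<le> key_rep (\<phi> lk)"
  proof
    fix y assume "y \<in> supp (lift1 F f)"
    then obtain x where x: "x \<in> supp f" "y = \<phi> x" using suppe by auto
    then have "key_rep x < key_rep lk \<or> x = lk" using lkp keyrep_inj[OF f(1)]
      by (metis inj_onD order_le_less)
    then show "key_rep y \<le> key_rep (\<phi> lk)" using mono x lkp(1) by (meson order_less_imp_le order_refl)
  qed
  then have lk': "lead_key (lift1 F f) = \<phi> lk"
    using lead_key_eq[OF Pdn'] suppe lkp(1) by blast
  have "init (lift1 F f) = monomial (\<phi> lk) (of_int (s lk) * f lk)"
    unfolding init_def lk' val[OF lkp(1)] ..
  also have "\<dots> = lift1 F (init f)"
  proof
    fix z
    have fl: "f lk \<noteq> 0" using lkp(1) by (simp add: supp_def)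
    have "lift1 F (init f) z = kap F lk z * f lk"
      unfolding lift1_def init_def lk[symmetric] supp_monomial[OF fl] by (simp add: monomial_def)
    then show "monomial (\<phi> lk) (of_int (s lk) * f lk) z = lift1 F (init f) z"
      using kapx[OF lkp(1)] by (simp add: monomial_def)
  qed
  finally show ?thesis using Pdn' ne by simp
qed


lemma lift_case_eq:
  "(case F x y of None \<Rightarrow> 0 | Some (c, w) \<Rightarrow> if w = z then of_int c * f x * h y else 0)
   = h y * (kap (\<lambda>x. F x y) x z * (f x :: 'k::comm_ring_1))"
  by (cases "F x y") (auto simp: kap_def)

lemma lift_right:
  "lift F f h z = (\<Sum>y\<in>supp h. h y * lift1 (\<lambda>x. F x y) f z)"
proof -
  have "lift F f h z = (\<Sum>x\<in>supp f. \<Sum>y\<in>supp h. h y * (kap (\<lambda>x. F x y) x z * f x))"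
    unfolding lift_def lift_case_eq ..
  also have "\<dots> = (\<Sum>y\<in>supp h. \<Sum>x\<in>supp f. h y * (kap (\<lambda>x. F x y) x z * f x))"
    by (rule sum.swap)
  also have "\<dots> = (\<Sum>y\<in>supp h. h y * lift1 (\<lambda>x. F x y) f z)"
    unfolding lift1_def by (simp add: sum_distrib_left)
  finally show ?thesis .
qed

lemma lift_case_eq2:
  "(case F y x of None \<Rightarrow> 0 | Some (c, w) \<Rightarrow> if w = z then of_int c * h y * f x else 0)
   = h y * (kap (F y) x z * (f x :: 'k::comm_ring_1))"
  by (cases "F y x") (auto simp: kap_def)

lemma lift_left:
  "lift F h f z = (\<Sum>y\<in>supp h. h y * lift1 (F y) f z)"
  unfolding lift_def lift1_def lift_case_eq2
  by (simp add: sum_distrib_left)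

lemma lift_mono1_right:
  assumes "(1::'k::comm_ring_1) \<noteq> 0"
  shows "lift F f (monomial y (1::'k)) = lift1 (\<lambda>x. F x y) f"
  unfolding lift_right supp_monomial[OF assms] by (rule ext) (simp add: monomial_def)

lemma lift_mono1_left:
  assumes "(1::'k::comm_ring_1) \<noteq> 0"
  shows "lift F (monomial y (1::'k)) f = lift1 (F y) f"
  unfolding lift_left supp_monomial[OF assms] by (rule ext) (simp add: monomial_def)

lemma lift1_linear:
  assumes "finite Q" "\<forall>q\<in>Q. finite (supp q)"
  shows "lift1 F (\<lambda>z. \<Sum>q\<in>Q. c q * q z) z = (\<Sum>q\<in>Q. c q * lift1 F q z)"
proof -
  define A where "A = \<Union> (supp ` Q)"
  have fA: "finite A" using assms A_def by simp
  have s1: "supp (\<lambda>z. \<Sum>q\<in>Q. c q * q z) \<subseteq> A"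
  proof
    fix x assume "x \<in> supp (\<lambda>z. \<Sum>q\<in>Q. c q * q z)"
    then have "(\<Sum>q\<in>Q. c q * q x) \<noteq> 0" by (simp add: supp_def)
    then obtain q where "q \<in> Q" "c q * q x \<noteq> 0" by (meson sum.neutral)
    then have "q \<in> Q" "q x \<noteq> 0" by auto
    then show "x \<in> A" unfolding A_def supp_def by blast
  qed
  have "lift1 F (\<lambda>z. \<Sum>q\<in>Q. c q * q z) z = (\<Sum>x\<in>A. kap F x z * (\<Sum>q\<in>Q. c q * q x))"
    by (rule lift1_sup[OF fA s1])
  also have "\<dots> = (\<Sum>x\<in>A. \<Sum>q\<in>Q. c q * (kap F x z * q x))"
    by (simp add: sum_distrib_left algebra_simps)
  also have "\<dots> = (\<Sum>q\<in>Q. \<Sum>x\<in>A. c q * (kap F x z * q x))"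
    by (rule sum.swap)
  also have "\<dots> = (\<Sum>q\<in>Q. c q * lift1 F q z)"
  proof (rule sum.cong)
    fix q assume q: "q \<in> Q"
    have "supp q \<subseteq> A" using q A_def by auto
    then show "(\<Sum>x\<in>A. c q * (kap F x z * q x)) = c q * lift1 F q z"
      using lift1_sup[OF fA \<open>supp q \<subseteq> A\<close>, of F z] by (simp add: sum_distrib_left)
  qed simp
  finally show ?thesis .
qed

lemma kspan_zero: "(\<lambda>_. 0) \<in> kspan X"
  unfolding kspan_def by (rule CollectI, rule exI[of _ "{}"]) simp

lemma kspan_base: "p \<in> X \<Longrightarrow> p \<in> kspan X"
  unfolding kspan_def by (rule CollectI, rule exI[of _ "{p}"], rule exI[of _ "\<lambda>_. 1"]) simp

lemma kspan_smult: "p \<in> kspan X \<Longrightarrow> (\<lambda>z. a * p z) \<in> kspan X"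
proof -
  assume "p \<in> kspan X"
  then obtain F c where F: "finite F" "F \<subseteq> X" "p = (\<lambda>z. \<Sum>q\<in>F. c q * q z)"
    unfolding kspan_def by blast
  have eq: "(\<lambda>z. a * p z) = (\<lambda>z. \<Sum>q\<in>F. (a * c q) * q z)"
    using F(3) by (simp add: sum_distrib_left mult.assoc)
  show ?thesis unfolding kspan_def mem_Collect_eq
    by (rule exI[of _ F], rule exI[of _ "\<lambda>q. a * c q"]) (simp add: F(1,2) eq)
qed

lemma kspan_add: "p \<in> kspan X \<Longrightarrow> r \<in> kspan X \<Longrightarrow> (\<lambda>z. p z + r z) \<in> kspan X"
proof -
  assume "p \<in> kspan X" "r \<in> kspan X"
  then obtain F c F' c' where F: "finite F" "F \<subseteq> X" "p = (\<lambda>z. \<Sum>q\<in>F. c q * q z)"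
    and F': "finite F'" "F' \<subseteq> X" "r = (\<lambda>z. \<Sum>q\<in>F'. c' q * q z)"
    unfolding kspan_def by blast
  define C where "C q = (if q \<in> F then c q else 0) + (if q \<in> F' then c' q else 0)" for q
  have eq: "(\<lambda>z. p z + r z) = (\<lambda>z. \<Sum>q\<in>F \<union> F'. C q * q z)"
  proof
    fix z
    have "(\<Sum>q\<in>F \<union> F'. C q * q z) = (\<Sum>q\<in>F \<union> F'. (if q \<in> F then c q * q z else 0))
        + (\<Sum>q\<in>F \<union> F'. (if q \<in> F' then c' q * q z else 0))"
      unfolding sum.distrib[symmetric] by (rule sum.cong) (auto simp: C_def distrib_right)
    also have "\<dots> = (\<Sum>q\<in>F. c q * q z) + (\<Sum>q\<in>F'. c' q * q z)"
    proof -
      have "(\<Sum>q\<in>F \<union> F'. if q \<in> F then c q * q z else 0) = (\<Sum>q\<in>(F \<union> F') \<inter> F. c q * q z)"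
        using F(1) F'(1) by (intro sum.inter_restrict[symmetric]) simp
      moreover have "(\<Sum>q\<in>F \<union> F'. if q \<in> F' then c' q * q z else 0) = (\<Sum>q\<in>(F \<union> F') \<inter> F'. c' q * q z)"
        using F(1) F'(1) by (intro sum.inter_restrict[symmetric]) simp
      moreover have "(F \<union> F') \<inter> F = F" "(F \<union> F') \<inter> F' = F'" by auto
      ultimately show ?thesis by simp
    qed
    finally show "p z + r z = (\<Sum>q\<in>F \<union> F'. C q * q z)" using F(3) F'(3) by simp
  qed
  show ?thesis unfolding kspan_def mem_Collect_eq
    by (rule exI[of _ "F \<union> F'"], rule exI[of _ C]) (simp add: F(1,2) F'(1,2) eq)
qed

lemma kspan_sum:
  assumes "finite A" "\<forall>a\<in>A. g a \<in> kspan X"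
  shows "(\<lambda>z. \<Sum>a\<in>A. g a z) \<in> kspan X"
  using assms
proof (induction A rule: finite_induct)
  case empty then show ?case using kspan_zero by simp
next
  case (insert a A)
  then show ?case using kspan_add[of "g a" X "\<lambda>z. \<Sum>a\<in>A. g a z"] by simp
qed

lemma kspan_sub:
  assumes "is_ideal M J" "X \<subseteq> J"
  shows "kspan X \<subseteq> J"
proof
  fix p assume "p \<in> kspan X"
  then obtain F c where F: "finite F" "F \<subseteq> X" "p = (\<lambda>z. \<Sum>q\<in>F. c q * q z)"
    unfolding kspan_def by blast
  have "(\<lambda>z. \<Sum>q\<in>F'. c q * q z) \<in> J" if "finite F'" "F' \<subseteq> X" for F'
    using that
  proof (induction F' rule: finite_induct)
    case empty then show ?case using assms(1) unfolding is_ideal_def by simp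
  next
    case (insert a A)
    have sm: "\<forall>c. \<forall>f\<in>J. (\<lambda>z. c * f z) \<in> J" using assms(1) unfolding is_ideal_def by blast
    have "a \<in> J" using insert.prems assms(2) by blast
    then have "(\<lambda>z. c a * a z) \<in> J" using sm by blast
    moreover have "\<forall>f\<in>J. \<forall>h\<in>J. (\<lambda>z. f z + h z) \<in> J" using assms(1) unfolding is_ideal_def by blast
    moreover have "(\<lambda>z. \<Sum>q\<in>insert a A. c q * q z) = (\<lambda>z. c a * a z + (\<Sum>q\<in>A. c q * q z))"
      using insert(1,2) by simp
    ultimately show ?case using insert by simp
  qed
  then show "p \<in> J" using F by simp
qed

lemma kspan_PM:
  assumes "X \<subseteq> PM M" "p \<in> kspan X"
  shows "p \<in> PM M"
proof -
  obtain F c where F: "finite F" "F \<subseteq> X" "p = (\<lambda>z. \<Sum>q\<in>F. c q * q z)"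
    using assms(2) unfolding kspan_def by blast
  have "supp p \<subseteq> \<Union> (supp ` F)"
  proof
    fix x assume "x \<in> supp p"
    then have "(\<Sum>q\<in>F. c q * q x) \<noteq> 0" using F(3) by (simp add: supp_def)
    then obtain q where "q \<in> F" "c q * q x \<noteq> 0" by (meson sum.neutral)
    then have "q \<in> F" "q x \<noteq> 0" by auto
    then show "x \<in> \<Union> (supp ` F)" unfolding supp_def by blast
  qed
  moreover have "\<forall>q\<in>F. finite (supp q) \<and> (\<forall>x\<in>supp q. valid_key M x)"
    using F(2) assms(1) by (auto simp: PM_def)
  ultimately have "finite (supp p)" "\<forall>x\<in>supp p. valid_key M x"
    using F(1) by (auto intro: finite_subset[of _ "\<Union> (supp ` F)"])
  then show ?thesis unfolding PM_def by blast
qed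



lemma setless_image:
  assumes g: "strict_mono (g::nat\<Rightarrow>nat)" and fin: "finite S" "finite S'"
    and sl: "setless S S'" and dj: "U \<inter> g ` S = {}" "U \<inter> g ` S' = {}"
  shows "setless (g ` S \<union> U) (g ` S' \<union> U)"
proof -
  have inj: "inj g" using g strict_mono_imp_inj_on by blast
  have D: "((g ` S \<union> U) - (g ` S' \<union> U)) \<union> ((g ` S' \<union> U) - (g ` S \<union> U)) = g ` ((S - S') \<union> (S' - S))"
    using dj inj by (auto simp: inj_eq) 
  have ne: "(S - S') \<union> (S' - S) \<noteq> {}" using sl unfolding setless_def by auto
  have "Min (g ` ((S - S') \<union> (S' - S))) = g (Min ((S - S') \<union> (S' - S)))"
    using mono_Min_commute[OF strict_mono_mono[OF g], of "(S - S') \<union> (S' - S)"] fin ne by simp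
  moreover have "Min ((S - S') \<union> (S' - S)) \<in> S" using sl setless_def by blast
  ultimately have "Min (((g ` S \<union> U) - (g ` S' \<union> U)) \<union> ((g ` S' \<union> U) - (g ` S \<union> U))) \<in> g ` S \<union> U"
    unfolding D by simp
  moreover have "g ` S \<union> U \<noteq> g ` S' \<union> U" using D ne by auto
  ultimately show ?thesis unfolding setless_def by blast
qed

lemma gcomp_range:
  assumes g: "strict_mono g" and c: "g ` {1..M * d} \<subseteq> {1..M * (d + e)}" and t: "t \<in> {1..M * e}"
  shows "gcomp M g d e t \<in> {1..M * (d + e)} - g ` {1..M * d}"
proof -
  define C where "C = {1..M * (d + e)} - g ` {1..M * d}"
  have inj: "inj g" using g strict_mono_imp_inj_on by blast
  have "card (g ` {1..M * d}) = M * d" using inj by (simp add: card_image inj_on_subset)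
  then have "card C = M * (d + e) - M * d" unfolding C_def using c by (simp add: card_Diff_subset)
  then have cC: "card C = M * e" by (simp add: algebra_simps)
  have "t - 1 < length (sorted_list_of_set C)" using cC t by auto
  then have "sorted_list_of_set C ! (t - 1) \<in> set (sorted_list_of_set C)" by (rule nth_mem)
  then show ?thesis unfolding gcomp_def C_def[symmetric] by (simp add: C_def)
qed

lemma valid_comp:
  assumes "valid_key M x" "i < length (snd x)"
  shows "snd x ! i \<subseteq> {1..M * fst x}" "card (snd x ! i) = fst x" "finite (snd x ! i)"
  using assms nth_mem unfolding valid_key_def by (blast, blast, meson finite_atLeastAtMost finite_subset nth_mem)

lemma star_key_mono:
  assumes g: "strict_mono g" and c: "g ` {1..M * d} \<subseteq> {1..M * (d + e)}"
    and x: "valid_key M x" "fst x = d" "length (snd x) = n"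
    and x': "valid_key M x'" "fst x' = d" "length (snd x') = n"
    and y: "valid_key M y" "fst y = e" "length (snd y) = n"
    and lt: "key_rep x < key_rep x'"
  shows "key_rep (d + e, map (\<lambda>(S, T). g ` S \<union> gcomp M g d e ` T) (zip (snd x) (snd y)))
       < key_rep (d + e, map (\<lambda>(S, T). g ` S \<union> gcomp M g d e ` T) (zip (snd x') (snd y)))"
proof -
  define gc where "gc = gcomp M g d e"
  define R where "R xs = map (\<lambda>(S, T). g ` S \<union> gc ` T) (zip xs (snd y))" for xs
  have Rn: "R xs ! j = g ` (xs ! j) \<union> gc ` (snd y ! j)" if "j < n" "length xs = n" for xs j
    using that y(3) by (simp add: R_def)
  have lR: "length (R xs) = n" if "length xs = n" for xs using that y(3) by (simp add: R_def)
  have comp: "finite (snd x ! j) \<and> finite (snd x' ! j) \<and> card (snd x ! j) = card (snd x' ! j)"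
    if "j < n" for j
    using valid_comp[OF x(1)] valid_comp[OF x'(1)] x x' that by simp
  have "lexset (snd x) (snd x')"
    using less_lexset[of "snd x" "snd x'"] comp lt x x' by (simp add: key_rep_def)
  then obtain i where i: "i < n" "take i (snd x) = take i (snd x')" "setless (snd x ! i) (snd x' ! i)"
    unfolding lexset_def using x by auto
  have gcr: "gc ` (snd y ! j) \<subseteq> {1..M * (d + e)} - g ` {1..M * d}" if "j < n" for j
    using gcomp_range[OF g c] valid_comp(1)[OF y(1)] y that gc_def by fastforce
  have gxr: "g ` (snd x ! j) \<subseteq> g ` {1..M * d}" "g ` (snd x' ! j) \<subseteq> g ` {1..M * d}" if "j < n" for j
    using valid_comp(1)[OF x(1), of j] valid_comp(1)[OF x'(1), of j] x x' that by (simp_all add: image_mono)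
  have dj: "gc ` (snd y ! j) \<inter> g ` (snd x ! j) = {}" "gc ` (snd y ! j) \<inter> g ` (snd x' ! j) = {}"
    if "j < n" for j using gcr[OF that] gxr[OF that] by blast+
  have "lexset (R (snd x)) (R (snd x'))"
    unfolding lexset_def
  proof (intro exI conjI)
    show "i < length (R (snd x))" using i lR x by simp
    show "take i (R (snd x)) = take i (R (snd x'))" unfolding R_def take_map take_zip i(2) ..
    show "setless (R (snd x) ! i) (R (snd x') ! i)"
      unfolding Rn[OF i(1) x(3)] Rn[OF i(1) x'(3)]
      using setless_image[OF g _ _ i(3) dj[OF i(1)]] comp[OF i(1)] by blast
  qed
  moreover have "\<forall>j<length (R (snd x)). finite (R (snd x) ! j) \<and> finite (R (snd x') ! j)
      \<and> card (R (snd x) ! j) = card (R (snd x') ! j)"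
  proof (intro allI impI)
    fix j assume "j < length (R (snd x))"
    then have j: "j < n" using lR x by simp
    have fT: "finite (gc ` (snd y ! j))" using valid_comp(3)[OF y(1)] y j by simp
    have inj: "inj g" using g strict_mono_imp_inj_on by blast
    have "card (R (snd x) ! j) = card (snd x ! j) + card (gc ` (snd y ! j))"
      unfolding Rn[OF j x(3)] using card_Un_disjoint[of "g ` (snd x ! j)" "gc ` (snd y ! j)"] dj[OF j] comp[OF j] fT inj
      by (simp add: card_image inj_on_subset Int_commute)
    moreover have "card (R (snd x') ! j) = card (snd x' ! j) + card (gc ` (snd y ! j))"
      unfolding Rn[OF j x'(3)] using card_Un_disjoint[of "g ` (snd x' ! j)" "gc ` (snd y ! j)"] dj[OF j] comp[OF j] fT inj
      by (simp add: card_image inj_on_subset Int_commute)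
    ultimately show "finite (R (snd x) ! j) \<and> finite (R (snd x') ! j) \<and> card (R (snd x) ! j) = card (R (snd x') ! j)"
      using comp[OF j] fT Rn[OF j x(3)] Rn[OF j x'(3)] by simp
  qed
  ultimately have "map sorted_list_of_set (R (snd x)) < map sorted_list_of_set (R (snd x'))"
    using lexset_less lR x x' by simp
  then show ?thesis by (simp add: key_rep_def R_def gc_def)
qed


lemma rank_lt:
  assumes "finite X" "k \<in> X"
  shows "card {a \<in> X. a < (k::nat)} < card X"
  using assms by (intro psubset_card_mono) auto

lemma rank_mono:
  assumes "finite X" "b1 \<in> X" "(b1::nat) < b2"
  shows "card {a \<in> X. a < b1} < card {a \<in> X. a < b2}"
  using assms by (intro psubset_card_mono) auto

lemma sigma_key_mono:
  assumes dj: "A \<inter> B = {}" and un: "A \<union> B = {1..n + m}" and cA: "card A = n"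
    and y: "valid_key M y" "fst y = d" "length (snd y) = n"
    and x: "valid_key M x" "fst x = d" "length (snd x) = m"
    and x': "valid_key M x'" "fst x' = d" "length (snd x') = m"
    and lt: "key_rep x < key_rep x'"
  shows "key_rep (d, map (interleave A B (snd y) (snd x)) [1..<n + m + 1])
       < key_rep (d, map (interleave A B (snd y) (snd x')) [1..<n + m + 1])"
proof -
  define N where "N = n + m"
  define rk where "rk b = card {b' \<in> B. b' < b}" for b
  define rA where "rA a = card {a' \<in> A. a' < a}" for a
  have finA: "finite A" and finB: "finite B" using un by (metis finite_Un finite_atLeastAtMost)+
  have cB: "card B = m"
    using card_Un_disjoint[OF finA finB dj] un cA by simp
  define R where "R xs = map (interleave A B (snd y) xs) [1..<N + 1]" for xs :: "nat set list"
  have Rn: "R xs ! j = interleave A B (snd y) xs (j + 1)" if "j < N" for xs j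
    using that unfolding R_def by (subst nth_map) (simp_all del: upt_Suc)
  have lR: "length (R xs) = N" for xs by (simp add: R_def del: upt_Suc)
  have comp: "finite (snd x ! j) \<and> finite (snd x' ! j) \<and> card (snd x ! j) = card (snd x' ! j)"
    if "j < m" for j
    using valid_comp[OF x(1)] valid_comp[OF x'(1)] x x' that by simp
  have "lexset (snd x) (snd x')"
    using less_lexset[of "snd x" "snd x'"] comp lt x x' by (simp add: key_rep_def)
  then obtain i where i: "i < m" "take i (snd x) = take i (snd x')" "setless (snd x ! i) (snd x' ! i)"
    unfolding lexset_def using x by auto
  have injrk: "inj_on rk B"
  proof
    fix b1 b2 assume b: "b1 \<in> B" "b2 \<in> B" "rk b1 = rk b2"
    show "b1 = b2"
    proof (rule ccontr)
      assume "b1 \<noteq> b2"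
      then have "b1 < b2 \<or> b2 < b1" by auto
      then show False
      proof
        assume "b1 < b2" then show False using rank_mono[OF finB b(1) \<open>b1 < b2\<close>] b(3) unfolding rk_def by linarith
      next
        assume "b2 < b1" then show False using rank_mono[OF finB b(2) \<open>b2 < b1\<close>] b(3) unfolding rk_def by linarith
      qed
    qed
  qed
  have "rk ` B \<subseteq> {..<m}" using rank_lt[OF finB] cB unfolding rk_def by auto
  moreover have "card (rk ` B) = card {..<m}" using card_image[OF injrk] cB by simp
  ultimately have "rk ` B = {..<m}" by (simp add: card_subset_eq)
  then obtain p where p: "p \<in> B" "rk p = i" using i(1) by (metis imageE lessThan_iff)
  have pN: "p \<in> {1..N}" using p un N_def by auto
  define j0 where "j0 = p - 1"
  have j0: "j0 < N" "j0 + 1 = p" using pN j0_def by auto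
  have "lexset (R (snd x)) (R (snd x'))"
    unfolding lexset_def
  proof (intro exI conjI)
    show "j0 < length (R (snd x))" using j0 lR by simp
    show "take j0 (R (snd x)) = take j0 (R (snd x'))"
    proof (rule nth_equalityI)
      show "length (take j0 (R (snd x))) = length (take j0 (R (snd x')))" by (simp add: lR)
      fix j assume "j < length (take j0 (R (snd x)))"
      then have j: "j < j0" "j < N" using lR j0 by auto
      have "interleave A B (snd y) (snd x) (j + 1) = interleave A B (snd y) (snd x') (j + 1)"
      proof (cases "j + 1 \<in> A")
        case True then show ?thesis by (simp add: interleave_def)
      next
        case False
        have "j + 1 \<in> A \<union> B" unfolding un using j N_def by simp
        then have "j + 1 \<in> B" using False by blast
        then have "rk (j + 1) < i" using rank_mono[OF finB, of "j + 1" p] j j0 p unfolding rk_def by simp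
        then have "snd x ! rk (j + 1) = snd x' ! rk (j + 1)"
          using arg_cong[OF i(2), of "\<lambda>l. l ! rk (j + 1)"] by simp
        then show ?thesis using False by (simp add: interleave_def rk_def)
      qed
      then show "take j0 (R (snd x)) ! j = take j0 (R (snd x')) ! j"
        using j by (simp add: Rn)
    qed
    have "p \<notin> A" using p dj by auto
    then have "R (snd x) ! j0 = snd x ! i" "R (snd x') ! j0 = snd x' ! i"
      using Rn[OF j0(1)] j0(2) p(2) by (simp_all add: interleave_def rk_def)
    then show "setless (R (snd x) ! j0) (R (snd x') ! j0)" using i(3) by simp
  qed
  moreover have "\<forall>j<length (R (snd x)). finite (R (snd x) ! j) \<and> finite (R (snd x') ! j)
      \<and> card (R (snd x) ! j) = card (R (snd x') ! j)"
  proof (intro allI impI)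
    fix j assume "j < length (R (snd x))"
    then have j: "j < N" using lR by simp
    show "finite (R (snd x) ! j) \<and> finite (R (snd x') ! j) \<and> card (R (snd x) ! j) = card (R (snd x') ! j)"
    proof (cases "j + 1 \<in> A")
      case True
      then have "rA (j + 1) < n" using rank_lt[OF finA True] cA unfolding rA_def by simp
      then have "finite (snd y ! rA (j + 1))" using valid_comp(3)[OF y(1)] y by simp
      then show ?thesis using True Rn[OF j] by (simp add: interleave_def rA_def)
    next
      case False
      have "j + 1 \<in> A \<union> B" unfolding un using j N_def by simp
      then have "j + 1 \<in> B" using False by blast
      then have "rk (j + 1) < m" using rank_lt[OF finB] cB unfolding rk_def by simp
      then show ?thesis using comp False Rn[OF j] by (simp add: interleave_def rk_def)
    qed
  qed
  ultimately have "map sorted_list_of_set (R (snd x)) < map sorted_list_of_set (R (snd x'))"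
    using lexset_less lR by simp
  then show ?thesis by (simp add: key_rep_def R_def N_def)
qed



lemma Pdn_keys:
  assumes "f \<in> Pdn M d n" "x \<in> supp f"
  shows "valid_key M x" "fst x = d" "length (snd x) = n"
  using assms by (auto simp: Pdn_def PM_def bideg_def)

lemma init_supp:
  assumes "f \<in> Pdn M d n" "f \<noteq> (\<lambda>_. 0)"
  shows "supp (init f) \<subseteq> supp f"
proof -
  have "lead_key f \<in> supp f" using lead_key_props[OF assms] by blast
  then show ?thesis unfolding init_def by (auto simp: supp_def monomial_def)
qed

lemma lift1_none:
  assumes "\<forall>x\<in>supp q. F x = None"
  shows "lift1 F q = (\<lambda>_. 0)"
  unfolding lift1_def using assms by (intro ext sum.neutral) (simp add: kap_def)

lemma one_ne: "(f :: key \<Rightarrow> 'k::comm_ring_1) \<noteq> (\<lambda>_. 0) \<Longrightarrow> (1::'k) \<noteq> 0"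
proof
  assume "f \<noteq> (\<lambda>_. 0)" "(1::'k) = 0"
  then obtain x where "f x \<noteq> 0" by auto
  moreover have "f x = f x * 1" by simp
  ultimately show False using \<open>(1::'k) = 0\<close> by simp
qed

lemma valid_monomial1: "valid_key M y \<Longrightarrow> monomial y 1 \<in> PM M"
  by (auto simp: PM_def supp_def monomial_def)

lemma neg_one_pow: "(-1::int) ^ k = 1 \<or> (-1::int) ^ k = -1"
  by (induction k) auto

abbreviation Gset :: "nat \<Rightarrow> (key \<Rightarrow> 'k::comm_ring_1) set \<Rightarrow> (key \<Rightarrow> 'k) set" where
  "Gset M I \<equiv> {init f | f. f \<noteq> (\<lambda>_. 0) \<and> (\<exists>d n. f \<in> I \<inter> Pdn M d n)}"

lemma init_ideal_eq: "init_ideal M I = kspan (Gset M I)"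
  unfolding init_ideal_def ..

lemma ideal_PM: "is_ideal M I \<Longrightarrow> I \<subseteq> PM M"
  unfolding is_ideal_def by blast

lemma star_key:
  assumes I: "is_ideal M I" and f: "f \<in> I" "f \<in> Pdn M d n" "f \<noteq> (\<lambda>_. 0)"
    and y: "valid_key M y" and g: "strict_mono g"
  shows "lift1 (\<lambda>x. star_mono M g x y) (init f) \<in> init_ideal M I"
proof (cases "length (snd y) = n \<and> g ` {1..M * d} \<subseteq> {1..M * (d + fst y)}")
  case False
  have "\<forall>x\<in>supp (init f). star_mono M g x y = None"
  proof
    fix x assume "x \<in> supp (init f)"
    then have "x \<in> supp f" using init_supp[OF f(2,3)] by blast
    then show "star_mono M g x y = None" using Pdn_keys[OF f(2)] False
      by (simp add: star_mono_def Let_def)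
  qed
  then have "lift1 (\<lambda>x. star_mono M g x y) (init f) = (\<lambda>_. 0)" by (rule lift1_none)
  then show ?thesis unfolding init_ideal_eq by (simp add: kspan_zero)
next
  case True
  define e where "e = fst y"
  define s where "s x = (-1::int) ^ (\<Sum>(S, T)\<leftarrow>zip (snd x) (snd y). wedge_inv (g ` S) (gcomp M g d e ` T))" for x :: key
  define \<phi> where "\<phi> x = (d + e, map (\<lambda>(S, T). g ` S \<union> gcomp M g d e ` T) (zip (snd x) (snd y)))" for x :: key
  have some: "\<forall>x\<in>supp f. star_mono M g x y = Some (s x, \<phi> x)"
  proof
    fix x assume x: "x \<in> supp f"
    show "star_mono M g x y = Some (s x, \<phi> x)"
      using Pdn_keys[OF f(2) x] True unfolding star_mono_def Let_def s_def \<phi>_def e_def by simp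
  qed
  have sgn: "\<forall>x\<in>supp f. s x = 1 \<or> s x = -1" unfolding s_def using neg_one_pow by blast
  have mono: "\<forall>x\<in>supp f. \<forall>x'\<in>supp f. key_rep x < key_rep x' \<longrightarrow> key_rep (\<phi> x) < key_rep (\<phi> x')"
    using star_key_mono[OF g _ Pdn_keys[OF f(2)] Pdn_keys[OF f(2)] y e_def[symmetric]] True
    unfolding \<phi>_def e_def by blast
  have bid: "\<forall>x\<in>supp f. bideg (\<phi> x) = (d + e, n)"
    using Pdn_keys[OF f(2)] True by (simp add: \<phi>_def bideg_def)
  have one: "(1::'a) \<noteq> 0" using one_ne[OF f(3)] .
  have inI: "lift1 (\<lambda>x. star_mono M g x y) f \<in> I"
  proof -
    have "star_prod M g f (monomial y 1) \<in> I"
      using I f(1) valid_monomial1[OF y] g unfolding is_ideal_def by blast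
    then show ?thesis unfolding star_prod_def lift_mono1_right[OF one] .
  qed
  have PM: "lift1 (\<lambda>x. star_mono M g x y) f \<in> PM M" using inI ideal_PM[OF I] by blast
  note K = key_lemma[OF f(2,3) some sgn mono bid PM]
  then have "init (lift1 (\<lambda>x. star_mono M g x y) f) \<in> Gset M I" using inI by blast
  then show ?thesis unfolding init_ideal_eq using K by (metis (no_types, lifting) kspan_base)
qed

lemma sigma_key:
  assumes I: "is_ideal M I" and f: "f \<in> I" "f \<in> Pdn M d m" "f \<noteq> (\<lambda>_. 0)"
    and y: "valid_key M y"
  shows "lift1 (sigma_mono A B y) (init f) \<in> init_ideal M I"
proof (cases "fst y = d \<and> A \<inter> B = {} \<and> A \<union> B = {1..length (snd y) + m} \<and> card A = length (snd y)")
  case False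
  have "\<forall>x\<in>supp (init f). sigma_mono A B y x = None"
  proof
    fix x assume "x \<in> supp (init f)"
    then have "x \<in> supp f" using init_supp[OF f(2,3)] by blast
    then show "sigma_mono A B y x = None" using Pdn_keys[OF f(2)] False
      by (simp add: sigma_mono_def Let_def)
  qed
  then have "lift1 (sigma_mono A B y) (init f) = (\<lambda>_. 0)" by (rule lift1_none)
  then show ?thesis unfolding init_ideal_eq by (simp add: kspan_zero)
next
  case True
  define n where "n = length (snd y)"
  define \<phi> where "\<phi> x = (d, map (interleave A B (snd y) (snd x)) [1..<n + m + 1])" for x :: key
  have some: "\<forall>x\<in>supp f. sigma_mono A B y x = Some ((\<lambda>_. 1) x, \<phi> x)"
  proof
    fix x assume x: "x \<in> supp f"
    show "sigma_mono A B y x = Some ((\<lambda>_. 1) x, \<phi> x)"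
      using Pdn_keys[OF f(2) x] True unfolding sigma_mono_def Let_def \<phi>_def n_def by simp
  qed
  have sgn: "\<forall>x\<in>supp f. (\<lambda>_. 1::int) x = 1 \<or> (\<lambda>_. 1::int) x = -1" by simp
  have mono: "\<forall>x\<in>supp f. \<forall>x'\<in>supp f. key_rep x < key_rep x' \<longrightarrow> key_rep (\<phi> x) < key_rep (\<phi> x')"
  proof (intro ballI impI)
    fix x x' assume x: "x \<in> supp f" and x': "x' \<in> supp f" and lt: "key_rep x < key_rep x'"
    have T: "A \<inter> B = {}" "A \<union> B = {1..n + m}" "card A = n" "fst y = d"
      using True n_def by auto
    show "key_rep (\<phi> x) < key_rep (\<phi> x')"
      unfolding \<phi>_def
      by (rule sigma_key_mono[OF T(1,2,3) y T(4) n_def[symmetric] Pdn_keys[OF f(2) x] Pdn_keys[OF f(2) x'] lt])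
  qed
  have bid: "\<forall>x\<in>supp f. bideg (\<phi> x) = (d, n + m)"
    using Pdn_keys[OF f(2)] by (simp add: \<phi>_def bideg_def del: upt_Suc)
  have one: "(1::'a) \<noteq> 0" using one_ne[OF f(3)] .
  have inI: "lift1 (sigma_mono A B y) f \<in> I"
  proof -
    have "sigma_prod A B (monomial y 1) f \<in> I"
      using I f(1) valid_monomial1[OF y] unfolding is_ideal_def by blast
    then show ?thesis unfolding sigma_prod_def lift_mono1_left[OF one] .
  qed
  have PM: "lift1 (sigma_mono A B y) f \<in> PM M" using inI ideal_PM[OF I] by blast
  note K = key_lemma[OF f(2,3) some sgn mono bid PM]
  then have "init (lift1 (sigma_mono A B y) f) \<in> Gset M I" using inI by blast
  then show ?thesis unfolding init_ideal_eq using K by (metis (no_types, lifting) kspan_base)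
qed



lemma comb:
  assumes p: "p \<in> kspan X" and X: "X \<subseteq> PM M" and h: "h \<in> PM M"
    and Q: "\<forall>q\<in>X. \<forall>y\<in>supp h. lift1 (\<Psi> y) q \<in> kspan X"
  shows "(\<lambda>z. \<Sum>y\<in>supp h. h y * lift1 (\<Psi> y) p z) \<in> kspan X"
proof -
  obtain F c where F: "finite F" "F \<subseteq> X" "p = (\<lambda>z. \<Sum>q\<in>F. c q * q z)"
    using p unfolding kspan_def by blast
  have fs: "\<forall>q\<in>F. finite (supp q)" using F(2) X by (auto simp: PM_def)
  have fh: "finite (supp h)" using h by (simp add: PM_def)
  have eq: "lift1 (\<Psi> y) p z = (\<Sum>q\<in>F. c q * lift1 (\<Psi> y) q z)" for y z
    unfolding F(3) by (rule lift1_linear[OF F(1) fs])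
  have inner: "(\<lambda>z. \<Sum>q\<in>F. c q * lift1 (\<Psi> y) q z) \<in> kspan X" if y: "y \<in> supp h" for y
  proof -
    have "\<forall>q\<in>F. (\<lambda>z. c q * lift1 (\<Psi> y) q z) \<in> kspan X"
      using Q F(2) y kspan_smult by blast
    then show ?thesis using kspan_sum[OF F(1), of "\<lambda>q z. c q * lift1 (\<Psi> y) q z"] by simp
  qed
  have "\<forall>y\<in>supp h. (\<lambda>z. h y * (\<Sum>q\<in>F. c q * lift1 (\<Psi> y) q z)) \<in> kspan X"
    using inner kspan_smult by blast
  then have "(\<lambda>z. \<Sum>y\<in>supp h. h y * (\<Sum>q\<in>F. c q * lift1 (\<Psi> y) q z)) \<in> kspan X"
    using kspan_sum[OF fh, of "\<lambda>y z. h y * (\<Sum>q\<in>F. c q * lift1 (\<Psi> y) q z)"] by simp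
  then show ?thesis unfolding eq .
qed

lemma G_props:
  assumes "q \<in> Gset M I" "is_ideal M I"
  shows "\<exists>f d n. q = init f \<and> f \<noteq> (\<lambda>_. 0) \<and> f \<in> I \<and> f \<in> Pdn M d n"
  using assms by blast

lemma init_monomial:
  assumes "f \<in> Pdn M d n" "f \<noteq> (\<lambda>_. 0)"
  shows "init f \<in> monomials M" "init f \<in> PM M"
proof -
  have lk: "lead_key f \<in> supp f" using lead_key_props[OF assms] by blast
  then have v: "valid_key M (lead_key f)" using Pdn_keys[OF assms(1)] by blast
  then show "init f \<in> monomials M" unfolding init_def monomials_def by blast
  have "supp (init f) \<subseteq> {lead_key f}" by (auto simp: init_def supp_def monomial_def)
  then show "init f \<in> PM M" using v unfolding PM_def by (auto intro: finite_subset)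
qed

lemma hcomp_init:
  "hcomp d n (monomial k c) = monomial k c \<or> hcomp d n (monomial k c) = (\<lambda>_. 0)"
  by (cases "bideg k = (d, n)") (auto simp: hcomp_def monomial_def)

theorem main_aux:
  fixes M :: nat and I :: "(key \<Rightarrow> 'k::comm_ring_1) set"
  assumes I: "is_ideal M I"
  shows "monomial_ideal M (init_ideal M I)"
proof -
  define G where "G = Gset M I"
  have K: "init_ideal M I = kspan G" unfolding G_def init_ideal_eq ..
  have Gm: "G \<subseteq> monomials M" and GP: "G \<subseteq> PM M"
    using init_monomial unfolding G_def by blast+
  have Gk: "G \<subseteq> kspan G" using kspan_base by blast
  have ideal: "is_ideal M (kspan G)"
    unfolding is_ideal_def
  proof (intro conjI ballI allI impI)
    show "kspan G \<subseteq> PM M" using kspan_PM[OF GP] by blast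
    show "(\<lambda>_. 0) \<in> kspan G" by (rule kspan_zero)
    show "(\<lambda>z. f z + h z) \<in> kspan G" if "f \<in> kspan G" "h \<in> kspan G" for f h
      using kspan_add that by blast
    show "(\<lambda>z. c * f z) \<in> kspan G" if "f \<in> kspan G" for c f
      using kspan_smult that by blast
  next
    fix p d n assume p: "p \<in> kspan G"
    obtain F c where F: "finite F" "F \<subseteq> G" "p = (\<lambda>z. \<Sum>q\<in>F. c q * q z)"
      using p unfolding kspan_def by blast
    have "hcomp d n p = (\<lambda>z. \<Sum>q\<in>F. c q * hcomp d n q z)"
      unfolding F(3) hcomp_def by (rule ext) (simp add: sum_distrib_left)
    moreover have "\<forall>q\<in>F. (\<lambda>z. c q * hcomp d n q z) \<in> kspan G"
    proof
      fix q assume q: "q \<in> F"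
      then have "q \<in> monomials M" using F(2) Gm by blast
      then obtain k a where "q = monomial k a" unfolding monomials_def by blast
      moreover have "q \<in> kspan G" using q F(2) kspan_base by blast
      ultimately have "hcomp d n q \<in> kspan G" using hcomp_init[of d n k a] kspan_zero[of G]
        by auto
      then show "(\<lambda>z. c q * hcomp d n q z) \<in> kspan G" using kspan_smult by blast
    qed
    ultimately show "hcomp d n p \<in> kspan G"
      using kspan_sum[OF F(1), of "\<lambda>q z. c q * hcomp d n q z"] by simp
  next
    fix p and h :: "key \<Rightarrow> 'k" and g :: "nat \<Rightarrow> nat" assume p: "p \<in> kspan G" and h: "h \<in> PM M" and g: "strict_mono g"
    have Q: "\<forall>q\<in>G. \<forall>y\<in>supp h. lift1 (\<lambda>x. star_mono M g x y) q \<in> kspan G"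
    proof (intro ballI)
      fix q y assume q: "q \<in> G" and y: "y \<in> supp h"
      obtain f d n where f: "q = init f" "f \<noteq> (\<lambda>_. 0)" "f \<in> I" "f \<in> Pdn M d n"
        using q unfolding G_def by blast
      have "valid_key M y" using h y by (simp add: PM_def)
      then show "lift1 (\<lambda>x. star_mono M g x y) q \<in> kspan G"
        using star_key[OF I f(3,4,2) _ g] f(1) K by simp
    qed
    have "star_prod M g p h = (\<lambda>z. \<Sum>y\<in>supp h. h y * lift1 (\<lambda>x. star_mono M g x y) p z)"
      unfolding star_prod_def by (rule ext) (rule lift_right)
    then show "star_prod M g p h \<in> kspan G"
      using comb[OF p GP h Q] by simp
  next
    fix p and h :: "key \<Rightarrow> 'k" and A B assume p: "p \<in> kspan G" and h: "h \<in> PM M"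
    have Q: "\<forall>q\<in>G. \<forall>y\<in>supp h. lift1 (sigma_mono A B y) q \<in> kspan G"
    proof (intro ballI)
      fix q y assume q: "q \<in> G" and y: "y \<in> supp h"
      obtain f d n where f: "q = init f" "f \<noteq> (\<lambda>_. 0)" "f \<in> I" "f \<in> Pdn M d n"
        using q unfolding G_def by blast
      have "valid_key M y" using h y by (simp add: PM_def)
      then show "lift1 (sigma_mono A B y) q \<in> kspan G"
        using sigma_key[OF I f(3,4,2)] f(1) K by simp
    qed
    have "sigma_prod A B h p = (\<lambda>z. \<Sum>y\<in>supp h. h y * lift1 (sigma_mono A B y) p z)"
      unfolding sigma_prod_def by (rule ext) (rule lift_left)
    then show "sigma_prod A B h p \<in> kspan G"
      using comb[OF p GP h Q] by simp
  qed
  have "kspan G = ideal_gen M G"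
  proof
    show "ideal_gen M G \<subseteq> kspan G" unfolding ideal_gen_def using ideal Gk by blast
    show "kspan G \<subseteq> ideal_gen M G" unfolding ideal_gen_def using kspan_sub by blast
  qed
  then show ?thesis unfolding monomial_ideal_def K using ideal Gm by blast
qed


theorem mainTheorem10:
  fixes M :: nat and I :: "(key \<Rightarrow> 'k::comm_ring_1) set"
  assumes "noetherian_ring TYPE('k)"
    and "is_ideal M I"
  shows "monomial_ideal M (init_ideal M I)"
  using main_aux[OF assms(2)] .

end
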